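(* Let $\prec$ be a reflection order on $T$. Suppose $\Gamma$ contains a diamond with distinct vertices $b,l,r,w$ and edges $b\xrightarrow{t_1}l\xrightarrow{t_2}w$ and $b\xrightarrow{t_1'}r\xrightarrow{t_2'}w$, where $t_1\prec t_1'$. Then $$t_1\prec t_2\succ t_2'\prec t_1'\succ t_1.$$ In particular, if $x_1\to x_2\to x_4$ is an increasing pair of edges, then its diamond flip (the unique pair of edges $x_1\to x_3\to x_4$ such that $\{x_1,x_2,x_3,x_4\}$ is a diamond) is a decreasing pair of edges.
   Context: $S_n$ is the symmetric group with simple reflections $s_i=(i\ i{+}1)$, length function $\ell$, and $T$ the set of all transpositions (reflections). The Bruhat graph $\Gamma$ is the directed graph on $S_n$ with an edge $w\xrightarrow{t}tw$, labelled by $t$, whenever $t\in T$ and $\ell(w)<\ell(tw)$. A reflection order is a total order $\prec$ on $T$ such that for all $1\le a<b<c\le n$ either $(a\,b)\prec(a\,c)\prec(b\,c)$ or $(b\,c)\prec(a\,c)\prec(a\,b)$. A pair of consecutive edges $x\xrightarrow{t}y\xrightarrow{t'}z$ is increasing if $t\prec t'$ and decreasing if $t\succ t'$. A diamond is a subgraph of $\Gamma$ with four distinct vertices $x_1,x_2,x_3,x_4$ and edges $x_1\to x_2\to x_4$, $x_1\to x_3\to x_4$. *)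

theory Defs
  imports "HOL-Combinatorics.Permutations" "HOL-Combinatorics.Transposition"
begin

definition Sn :: "nat \<Rightarrow> (nat \<Rightarrow> nat) set" where
  "Sn n = {w. w permutes {1..n}}"

definition refls :: "nat \<Rightarrow> (nat \<Rightarrow> nat) set" where
  "refls n = {transpose a b | a b. 1 \<le> a \<and> a < b \<and> b \<le> n}"

text \<open>Coxeter length in S_n = number of inversions.\<close>
definition len :: "nat \<Rightarrow> (nat \<Rightarrow> nat) \<Rightarrow> nat" where
  "len n w = card {(i, j). 1 \<le> i \<and> i < j \<and> j \<le> n \<and> w j < w i}"

definition bruhat_edge :: "nat \<Rightarrow> (nat \<Rightarrow> nat) \<Rightarrow> (nat \<Rightarrow> nat) \<Rightarrow> (nat \<Rightarrow> nat) \<Rightarrow> bool" where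
  "bruhat_edge n x t y \<longleftrightarrow> x \<in> Sn n \<and> t \<in> refls n \<and> y = t \<circ> x \<and> len n x < len n y"

definition reflection_order :: "nat \<Rightarrow> ((nat \<Rightarrow> nat) \<times> (nat \<Rightarrow> nat)) set \<Rightarrow> bool" where
  "reflection_order n R \<longleftrightarrow>
     R \<subseteq> refls n \<times> refls n \<and> strict_linear_order_on (refls n) R \<and>
     (\<forall>a b c. 1 \<le> a \<and> a < b \<and> b < c \<and> c \<le> n \<longrightarrow>
        ((transpose a b, transpose a c) \<in> R \<and> (transpose a c, transpose b c) \<in> R) \<or>
        ((transpose b c, transpose a c) \<in> R \<and> (transpose a c, transpose a b) \<in> R))"

end

theory Submission
  imports Defs
begin


definition invs :: "nat \<Rightarrow> (nat \<Rightarrow> nat) \<Rightarrow> (nat \<times> nat) set" where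
  "invs n w = {(i, j). 1 \<le> i \<and> i < j \<and> j \<le> n \<and> w j < w i}"

lemma len_invs: "len n w = card (invs n w)" by (simp add: len_def invs_def)

lemma finite_invs: "finite (invs n w)"
  by (rule finite_subset[of _ "{1..n} \<times> {1..n}"]) (auto simp: invs_def)

lemma len_mono:
  assumes x: "inj x" and pq: "1 \<le> p" "p < q" "q \<le> n" and xpq: "x p < x q"
  shows "len n x < len n (transpose (x p) (x q) \<circ> x)"
proof -
  define a where "a = x p"
  define c where "c = x q"
  define y where "y = transpose a c \<circ> x"
  have yp: "y p = c" and yq: "y q = a" by (auto simp: y_def a_def c_def)
  have yk: "y k = x k" if "k \<noteq> p" "k \<noteq> q" for k
    using that x by (auto simp: y_def a_def c_def inj_eq transpose_def)
  have ac: "a < c" using xpq by (simp add: a_def c_def)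
  define f where "f = (\<lambda>(i::nat, j::nat). if (i = p \<and> p < j \<and> j < q) \<or> (j = q \<and> p < i \<and> i < q)
       then (i, j) else (transpose p q i, transpose p q j))"
  have pq_notin: "(p, q) \<notin> invs n x" using xpq by (simp add: invs_def)
  have into: "f z \<in> invs n y - {(p,q)}" if "z \<in> invs n x" for z
  proof -
    obtain i j where z: "z = (i, j)" by fastforce
    have ij: "1 \<le> i" "i < j" "j \<le> n" "x j < x i" using that z by (auto simp: invs_def)
    have nz: "(i,j) \<noteq> (p,q)" using that z pq_notin by auto
    show ?thesis
    proof (cases "(i = p \<and> p < j \<and> j < q) \<or> (j = q \<and> p < i \<and> i < q)")
      case True
      then show ?thesis using ij yk yp yq ac by (auto simp: f_def z invs_def a_def c_def)
    next
      case False
      then show ?thesis using ij yk yp yq ac nz pq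
        by (auto simp: f_def z invs_def a_def c_def transpose_def split: if_splits)
    qed
  qed
  have inj: "inj_on f (invs n x)"
    unfolding inj_on_def f_def invs_def transpose_def by auto
  have "card (invs n x) \<le> card (invs n y - {(p,q)})"
  proof (rule card_inj_on_le[OF inj])
    show "f ` invs n x \<subseteq> invs n y - {(p, q)}" using into by (intro image_subsetI)
    show "finite (invs n y - {(p, q)})" using finite_invs by simp
  qed
  also have "\<dots> < card (invs n y)"
    using yp yq ac pq finite_invs by (intro card_Diff1_less) (auto simp: invs_def)
  finally show ?thesis by (simp add: len_invs y_def a_def c_def)
qed



lemma fix_prod:
  fixes a c a' c' z :: nat
  assumes "a < c" "a' < c'" "z \<in> {a, c, a', c'}" "transpose a' c' (transpose a c z) = z"
  shows "a = a' \<and> c = c'"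
  using assms unfolding transpose_def by (auto split: if_splits)

lemma supp_sub:
  fixes a1 c1 a2 c2 a3 c3 a4 c4 :: nat
  assumes o: "a1 < c1" "a2 < c2" "a3 < c3" "a4 < c4"
    and eq: "transpose a2 c2 \<circ> transpose a1 c1 = transpose a4 c4 \<circ> transpose a3 c3"
    and n12: "(a1, c1) \<noteq> (a2, c2)"
  shows "{a3, c3, a4, c4} \<subseteq> {a1, c1, a2, c2}"
proof
  have e: "transpose a2 c2 (transpose a1 c1 z) = transpose a4 c4 (transpose a3 c3 z)" for z
    using fun_cong[OF eq, of z] by simp
  fix z assume z: "z \<in> {a3, c3, a4, c4}"
  have "transpose a4 c4 (transpose a3 c3 z) \<noteq> z"
  proof
    assume "transpose a4 c4 (transpose a3 c3 z) = z"
    then have "a3 = a4 \<and> c3 = c4" using fix_prod[OF o(3,4) z] by blast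
    then have "transpose a2 c2 (transpose a1 c1 a1) = a1" using e[of a1] by simp
    then show False using fix_prod[OF o(1,2), of a1] n12 by auto
  qed
  then show "z \<in> {a1, c1, a2, c2}" using e[of z] by (auto simp: transpose_def split: if_splits)
qed

lemma card4_distinct:
  assumes "card {w, x, y, z} = 4"
  shows "distinct [w, x, y, z]"
proof (rule ccontr)
  assume "\<not> distinct [w, x, y, z]"
  then have "card {w, x, y, z} \<le> 3"
    by (auto simp: insert_commute card_insert_le_m1 intro: order.trans[OF card_insert_le])
  then show False using assms by simp
qed

lemma disj_case:
  fixes a1 c1 a2 c2 a3 c3 a4 c4 :: nat
  assumes o: "a1 < c1" "a2 < c2" "a3 < c3" "a4 < c4"
    and eq: "transpose a2 c2 \<circ> transpose a1 c1 = transpose a4 c4 \<circ> transpose a3 c3"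
    and d: "a1 \<noteq> a2" "a1 \<noteq> c2" "c1 \<noteq> a2" "c1 \<noteq> c2"
    and n13: "(a1, c1) \<noteq> (a3, c3)"
  shows "a3 = a2 \<and> c3 = c2 \<and> a4 = a1 \<and> c4 = c1"
proof -
  have e: "transpose a2 c2 (transpose a1 c1 z) = transpose a4 c4 (transpose a3 c3 z)" for z
    using fun_cong[OF eq, of z] by simp
  have n12: "(a1, c1) \<noteq> (a2, c2)" using d by auto
  have S: "{a3, c3, a4, c4} = {a1, c1, a2, c2}"
  proof
    show "{a3, c3, a4, c4} \<subseteq> {a1, c1, a2, c2}" by (rule supp_sub[OF o eq n12])
    have n34: "(a3, c3) \<noteq> (a4, c4)"
    proof
      assume "(a3, c3) = (a4, c4)"
      then show False using e[of a1] fix_prod[OF o(1,2), of a1] n12 by auto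
    qed
    show "{a1, c1, a2, c2} \<subseteq> {a3, c3, a4, c4}" by (rule supp_sub[OF o(3,4,1,2) eq[symmetric] n34])
  qed
  have c4: "card {a1, c1, a2, c2} = 4" using d o by auto
  then have "distinct [a3, c3, a4, c4]" using S by (intro card4_distinct) simp
  then have d2: "a3 \<noteq> a4" "a3 \<noteq> c4" "c3 \<noteq> a4" "c3 \<noteq> c4" by auto
  have "transpose a2 c2 (transpose a1 c1 a3) = c3" using e[of a3] d2 o by simp
  moreover have "a3 \<in> {a1, c1, a2, c2}" using S by auto
  ultimately have 3: "a3 = a2 \<and> c3 = c2" using o d n13 by (auto simp: transpose_def)
  have "transpose a2 c2 (transpose a1 c1 a4) = c4" using e[of a4] d2 o by simp
  moreover have "a4 \<in> {a1, c1, a2, c2}" using S by auto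
  ultimately have 4: "a4 = a1 \<and> c4 = c1" using o d 3 d2 by (auto simp: transpose_def)
  show ?thesis using 3 4 by simp
qed



lemma tri_core:
  fixes a b c a1 c1 a2 c2 a3 c3 a4 c4 :: nat and P :: "nat \<Rightarrow> nat"
    and Q :: "((nat \<times> nat) \<times> (nat \<times> nat)) set"
  assumes abc: "a < b" "b < c"
    and m: "(a1, c1) \<in> {(a,b),(a,c),(b,c)}" "(a2, c2) \<in> {(a,b),(a,c),(b,c)}"
           "(a3, c3) \<in> {(a,b),(a,c),(b,c)}" "(a4, c4) \<in> {(a,b),(a,c),(b,c)}"
    and ea: "transpose a2 c2 (transpose a1 c1 a) = transpose a4 c4 (transpose a3 c3 a)"
    and eb: "transpose a2 c2 (transpose a1 c1 b) = transpose a4 c4 (transpose a3 c3 b)"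
    and ec: "transpose a2 c2 (transpose a1 c1 c) = transpose a4 c4 (transpose a3 c3 c)"
    and n12: "(a1, c1) \<noteq> (a2, c2)" and n13: "(a1, c1) \<noteq> (a3, c3)"
    and P: "P a \<noteq> P b" "P a \<noteq> P c" "P b \<noteq> P c"
    and E1: "P a1 < P c1" and E2: "P (transpose a1 c1 a2) < P (transpose a1 c1 c2)"
    and E3: "P a3 < P c3" and E4: "P (transpose a3 c3 a4) < P (transpose a3 c3 c4)"
    and irr: "((a,b),(a,b)) \<notin> Q" "((a,c),(a,c)) \<notin> Q" "((b,c),(b,c)) \<notin> Q"
    and Qf: "(((a,b),(a,c)) \<in> Q \<and> ((a,c),(b,c)) \<in> Q \<and> ((a,b),(b,c)) \<in> Q \<and>
      ((a,c),(a,b)) \<notin> Q \<and> ((b,c),(a,c)) \<notin> Q \<and> ((b,c),(a,b)) \<notin> Q) \<or>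
      (((a,c),(a,b)) \<in> Q \<and> ((b,c),(a,c)) \<in> Q \<and> ((b,c),(a,b)) \<in> Q \<and>
      ((a,b),(a,c)) \<notin> Q \<and> ((a,c),(b,c)) \<notin> Q \<and> ((a,b),(b,c)) \<notin> Q)"
    and q13: "((a1, c1), (a3, c3)) \<in> Q"
  shows "((a1, c1), (a2, c2)) \<in> Q \<and> ((a4, c4), (a2, c2)) \<in> Q \<and> ((a4, c4), (a3, c3)) \<in> Q"
proof -
  have ne: "a \<noteq> b" "a \<noteq> c" "b \<noteq> c" "b \<noteq> a" "c \<noteq> a" "c \<noteq> b" using abc by auto
  from m show ?thesis
    using ea eb ec n12 n13 E1 E2 E3 E4 q13 Qf P irr
    apply (simp only: insert_iff empty_iff prod.inject simp_thms)
    apply (elim disjE conjE)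
    apply (simp_all add: ne)
    done
qed

lemma tri:
  fixes a b c a1 c1 a2 c2 a3 c3 a4 c4 :: nat and P :: "nat \<Rightarrow> nat"
    and Q :: "((nat \<times> nat) \<times> (nat \<times> nat)) set"
  assumes abc: "a < b" "b < c"
    and m: "(a1, c1) \<in> {(a,b),(a,c),(b,c)}" "(a2, c2) \<in> {(a,b),(a,c),(b,c)}"
           "(a3, c3) \<in> {(a,b),(a,c),(b,c)}" "(a4, c4) \<in> {(a,b),(a,c),(b,c)}"
    and e: "\<And>z. transpose a2 c2 (transpose a1 c1 z) = transpose a4 c4 (transpose a3 c3 z)"
    and n12: "(a1, c1) \<noteq> (a2, c2)" and n13: "(a1, c1) \<noteq> (a3, c3)"
    and P: "P a \<noteq> P b" "P a \<noteq> P c" "P b \<noteq> P c"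
    and E1: "P a1 < P c1" and E2: "P (transpose a1 c1 a2) < P (transpose a1 c1 c2)"
    and E3: "P a3 < P c3" and E4: "P (transpose a3 c3 a4) < P (transpose a3 c3 c4)"
    and tr: "\<And>x y z. (x, y) \<in> Q \<Longrightarrow> (y, z) \<in> Q \<Longrightarrow> (x, z) \<in> Q"
    and asy: "\<And>x y. (x, y) \<in> Q \<Longrightarrow> (y, x) \<notin> Q"
    and ax: "(((a,b),(a,c)) \<in> Q \<and> ((a,c),(b,c)) \<in> Q) \<or> (((b,c),(a,c)) \<in> Q \<and> ((a,c),(a,b)) \<in> Q)"
    and q13: "((a1, c1), (a3, c3)) \<in> Q"
  shows "((a1, c1), (a2, c2)) \<in> Q \<and> ((a4, c4), (a2, c2)) \<in> Q \<and> ((a4, c4), (a3, c3)) \<in> Q"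
proof -
  have irr: "(x, x) \<notin> Q" for x using asy by blast
  have Qf: "(((a,b),(a,c)) \<in> Q \<and> ((a,c),(b,c)) \<in> Q \<and> ((a,b),(b,c)) \<in> Q \<and>
      ((a,c),(a,b)) \<notin> Q \<and> ((b,c),(a,c)) \<notin> Q \<and> ((b,c),(a,b)) \<notin> Q) \<or>
      (((a,c),(a,b)) \<in> Q \<and> ((b,c),(a,c)) \<in> Q \<and> ((b,c),(a,b)) \<in> Q \<and>
      ((a,b),(a,c)) \<notin> Q \<and> ((a,c),(b,c)) \<notin> Q \<and> ((a,b),(b,c)) \<notin> Q)"
    using ax tr asy by meson
  show ?thesis
    by (rule tri_core[OF abc m e e e n12 n13 P E1 E2 E3 E4 irr irr irr Qf q13])
qed


lemma sort3:
  fixes S :: "nat set"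
  assumes "card S = 3"
  obtains a b c where "a < b" "b < c" "S = {a, b, c}"
proof -
  obtain x y z where S: "S = {x, y, z}" "x \<noteq> y" "y \<noteq> z" "x \<noteq> z"
    using assms unfolding card_3_iff by blast
  have p1: "{x, y, z} = {x, z, y}" "{x, y, z} = {y, x, z}" "{x, y, z} = {y, z, x}"
    "{x, y, z} = {z, x, y}" "{x, y, z} = {z, y, x}" by (simp_all add: insert_commute)
  consider "x < y" "y < z" | "x < z" "z < y" | "y < x" "x < z" | "y < z" "z < x"
    | "z < x" "x < y" | "z < y" "y < x"
    using S(2-4) by linarith
  then show ?thesis
  proof cases
    case 1 then show ?thesis using that[of x y z] S(1) by simp
  next
    case 2 then show ?thesis using that[of x z y] S(1) p1 by simp
  next
    case 3 then show ?thesis using that[of y x z] S(1) p1 by simp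
  next
    case 4 then show ?thesis using that[of y z x] S(1) p1 by simp
  next
    case 5 then show ?thesis using that[of z x y] S(1) p1 by simp
  next
    case 6 then show ?thesis using that[of z y x] S(1) p1 by simp
  qed
qed

lemma edge_iff:
  assumes x: "x permutes {1..n}" and ac: "1 \<le> a" "a < c" "c \<le> n"
  shows "len n x < len n (transpose a c \<circ> x) \<longleftrightarrow> inv x a < inv x c"
proof -
  define p where "p = inv x a"
  define q where "q = inv x c"
  have xp: "x p = a" and xq: "x q = c" using x by (auto simp: p_def q_def permutes_inverses)
  have ix: "inv x permutes {1..n}" using x by (rule permutes_inv)
  have pr: "p \<in> {1..n}" "q \<in> {1..n}" using ac permutes_in_image[OF ix] by (auto simp: p_def q_def)
  have pq: "p \<noteq> q" using xp xq ac by auto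
  have ij: "inj x" using x by (rule permutes_inj)
  show ?thesis
  proof (cases "p < q")
    case True
    have "len n x < len n (transpose (x p) (x q) \<circ> x)"
      using len_mono[OF ij, of p q n] True pr xp xq ac by auto
    then show ?thesis using True xp xq by (simp add: p_def q_def)
  next
    case False
    then have qp: "q < p" using pq by simp
    define y where "y = transpose a c \<circ> x"
    have ijy: "inj y" unfolding y_def using ij by (simp add: inj_compose)
    have yq: "y q = a" and yp: "y p = c" using xp xq by (auto simp: y_def)
    have "len n y < len n (transpose (y q) (y p) \<circ> y)"
      using len_mono[OF ijy, of q p n] qp pr yq yp ac by auto
    also have "transpose (y q) (y p) \<circ> y = x" using yq yp
      by (simp add: y_def o_assoc[symmetric] fun_eq_iff)
    finally have yl: "len n y < len n x" .
    have "\<not> len n x < len n (transpose a c \<circ> x)" using yl unfolding y_def by linarith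
    moreover have "\<not> inv x a < inv x c" using qp by (simp add: p_def q_def)
    ultimately show ?thesis by blast
  qed
qed

lemma inv_comp_tr:
  fixes a c n z :: nat
  assumes b: "b permutes {1..n}" and ac: "1 \<le> a" "a < c" "c \<le> n"
  shows "inv (transpose a c \<circ> b) z = inv b (transpose a c z)"
proof -
  have "transpose a c permutes {1..n}" by (rule permutes_swap_id) (use ac in auto)
  then have pc: "transpose a c \<circ> b permutes {1..n}" using b by (intro permutes_compose)
  have "(transpose a c \<circ> b) (inv b (transpose a c z)) = z"
    using b by (simp add: permutes_inverses)
  then show ?thesis using permutes_inv_eq[OF pc] by blast
qed

lemma refl_obtain:
  assumes "t \<in> refls n"
  obtains a c where "t = transpose a c" "1 \<le> a" "a < c" "c \<le> n"
  using assms unfolding refls_def by blast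

lemma part1:
  fixes n :: nat and R :: "((nat \<Rightarrow> nat) \<times> (nat \<Rightarrow> nat)) set"
  assumes ro: "reflection_order n R"
    and dist: "distinct [b, l, r, w]"
    and ed: "bruhat_edge n b t1 l" "bruhat_edge n l t2 w" "bruhat_edge n b t1' r" "bruhat_edge n r t2' w"
    and q: "(t1, t1') \<in> R"
  shows "(t1, t2) \<in> R \<and> (t2', t2) \<in> R \<and> (t2', t1') \<in> R"
proof -
  have bS: "b permutes {1..n}" using ed by (simp add: bruhat_edge_def Sn_def)
  obtain a1 c1 where t1: "t1 = transpose a1 c1" "1 \<le> a1" "a1 < c1" "c1 \<le> n"
    using ed(1) unfolding bruhat_edge_def by (meson refl_obtain)
  obtain a2 c2 where t2: "t2 = transpose a2 c2" "1 \<le> a2" "a2 < c2" "c2 \<le> n"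
    using ed(2) unfolding bruhat_edge_def by (meson refl_obtain)
  obtain a3 c3 where t3: "t1' = transpose a3 c3" "1 \<le> a3" "a3 < c3" "c3 \<le> n"
    using ed(3) unfolding bruhat_edge_def by (meson refl_obtain)
  obtain a4 c4 where t4: "t2' = transpose a4 c4" "1 \<le> a4" "a4 < c4" "c4 \<le> n"
    using ed(4) unfolding bruhat_edge_def by (meson refl_obtain)
  have l: "l = t1 \<circ> b" "len n b < len n l" using ed(1) by (auto simp: bruhat_edge_def)
  have w: "w = t2 \<circ> l" "len n l < len n w" using ed(2) by (auto simp: bruhat_edge_def)
  have r: "r = t1' \<circ> b" "len n b < len n r" using ed(3) by (auto simp: bruhat_edge_def)
  have w': "w = t2' \<circ> r" "len n r < len n w" using ed(4) by (auto simp: bruhat_edge_def)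
  have lS: "l permutes {1..n}" using ed(2) by (simp add: bruhat_edge_def Sn_def)
  have rS: "r permutes {1..n}" using ed(4) by (simp add: bruhat_edge_def Sn_def)
  define P where "P = inv b"
  have "len n b < len n (transpose a1 c1 \<circ> b)" using l t1(1) by simp
  then have E1: "P a1 < P c1" using edge_iff[OF bS t1(2-4)] by (simp add: P_def)
  have "len n b < len n (transpose a3 c3 \<circ> b)" using r t3(1) by simp
  then have E3: "P a3 < P c3" using edge_iff[OF bS t3(2-4)] by (simp add: P_def)
  have il: "inv l z = P (transpose a1 c1 z)" for z
    unfolding l(1) t1(1) P_def by (rule inv_comp_tr[OF bS t1(2-4)])
  have ir: "inv r z = P (transpose a3 c3 z)" for z
    unfolding r(1) t3(1) P_def by (rule inv_comp_tr[OF bS t3(2-4)])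
  have "len n l < len n (transpose a2 c2 \<circ> l)" using w t2(1) by simp
  then have "inv l a2 < inv l c2" using edge_iff[OF lS t2(2-4)] by simp
  then have E2: "P (transpose a1 c1 a2) < P (transpose a1 c1 c2)" unfolding il .
  have "len n r < len n (transpose a4 c4 \<circ> r)" using w' t4(1) by simp
  then have "inv r a4 < inv r c4" using edge_iff[OF rS t4(2-4)] by simp
  then have E4: "P (transpose a3 c3 a4) < P (transpose a3 c3 c4)" unfolding ir .
  have wl: "w = t2 \<circ> t1 \<circ> b" using w(1) l(1) by (simp add: o_assoc)
  have wr: "w = t2' \<circ> t1' \<circ> b" using w'(1) r(1) by (simp add: o_assoc)
  have e: "transpose a2 c2 (transpose a1 c1 z) = transpose a4 c4 (transpose a3 c3 z)" for z
  proof -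
    have "(t2 \<circ> t1 \<circ> b) (P z) = (t2' \<circ> t1' \<circ> b) (P z)" using wl wr by simp
    then show ?thesis using t1(1) t2(1) t3(1) t4(1) bS by (simp add: P_def permutes_inverses)
  qed
  have eq: "transpose a2 c2 \<circ> transpose a1 c1 = transpose a4 c4 \<circ> transpose a3 c3"
    using e by (simp add: fun_eq_iff)
  have n12: "(a1, c1) \<noteq> (a2, c2)"
  proof
    assume "(a1, c1) = (a2, c2)"
    then have "w = b" using w(1) l(1) t1 t2 by (simp add: fun_eq_iff)
    then show False using dist by simp
  qed
  have n13: "(a1, c1) \<noteq> (a3, c3)"
  proof
    assume "(a1, c1) = (a3, c3)"
    then have "l = r" using l(1) r(1) t1 t3 by simp
    then show False using dist by simp
  qed
  have injP: "inj P" unfolding P_def using permutes_inj[OF permutes_inv[OF bS]] .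
  define Q where "Q = {((x, y), (u, v)). (transpose x y, transpose u v) \<in> R}"
  have Qi: "((x, y), (u, v)) \<in> Q \<longleftrightarrow> (transpose x y, transpose u v) \<in> R" for x y u v
    by (simp add: Q_def)
  have Rsub: "R \<subseteq> refls n \<times> refls n" and slo: "strict_linear_order_on (refls n) R"
    and ax0: "\<And>a b c. 1 \<le> a \<Longrightarrow> a < b \<Longrightarrow> b < c \<Longrightarrow> c \<le> n \<Longrightarrow>
        ((transpose a b, transpose a c) \<in> R \<and> (transpose a c, transpose b c) \<in> R) \<or>
        ((transpose b c, transpose a c) \<in> R \<and> (transpose a c, transpose a b) \<in> R)"
    using ro unfolding reflection_order_def by blast+
  have transR: "trans R" and irrR: "irrefl R" using slo by (auto simp: strict_linear_order_on_def)
  have tr: "(x, z) \<in> Q" if "(x, y) \<in> Q" "(y, z) \<in> Q" for x y z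
  proof -
    obtain x1 x2 y1 y2 z1 z2 where xyz: "x = (x1, x2)" "y = (y1, y2)" "z = (z1, z2)"
      by (cases x, cases y, cases z) simp
    show ?thesis using that transD[OF transR] unfolding xyz Qi by blast
  qed
  have asy: "(y, x) \<notin> Q" if "(x, y) \<in> Q" for x y
  proof
    assume "(y, x) \<in> Q"
    then have "(x, x) \<in> Q" using tr that by blast
    moreover obtain x1 x2 where "x = (x1, x2)" by (cases x)
    ultimately show False using irrR by (simp add: Q_def irrefl_def)
  qed
  have q13: "((a1, c1), (a3, c3)) \<in> Q" using q t1 t3 by (simp add: Qi)
  have main: "((a1, c1), (a2, c2)) \<in> Q \<and> ((a4, c4), (a2, c2)) \<in> Q \<and> ((a4, c4), (a3, c3)) \<in> Q"
  proof (cases "a1 \<noteq> a2 \<and> a1 \<noteq> c2 \<and> c1 \<noteq> a2 \<and> c1 \<noteq> c2")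
    case True
    then have "a3 = a2 \<and> c3 = c2 \<and> a4 = a1 \<and> c4 = c1"
      using disj_case[OF t1(3) t2(3) t3(3) t4(3) eq] n13 by blast
    then show ?thesis using q13 by simp
  next
    case False
    have c3: "card S = 3" if "x \<noteq> y" "y \<noteq> z" "x \<noteq> z" "S = {x, y, z}" for S and x y z :: nat
      using that by simp
    from False have "a1 = a2 \<or> a1 = c2 \<or> c1 = a2 \<or> c1 = c2" by blast
    then have "card {a1, c1, a2, c2} = 3"
    proof (elim disjE)
      assume h: "a1 = a2"
      then have "c1 \<noteq> c2" using n12 by simp
      then show ?thesis using h t1(3) t2(3) by (intro c3[of a1 c1 c2]) auto
    next
      assume h: "a1 = c2"
      then show ?thesis using h t1(3) t2(3) by (intro c3[of a1 c1 a2]) auto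
    next
      assume h: "c1 = a2"
      then show ?thesis using h t1(3) t2(3) by (intro c3[of a1 c1 c2]) auto
    next
      assume h: "c1 = c2"
      then have "a1 \<noteq> a2" using n12 by simp
      then show ?thesis using h t1(3) t2(3) by (intro c3[of a1 c1 a2]) auto
    qed
    then obtain a b c where abc: "a < b" "b < c" "{a1, c1, a2, c2} = {a, b, c}" by (rule sort3)
    have sub: "{a3, c3, a4, c4} \<subseteq> {a, b, c}"
      using supp_sub[OF t1(3) t2(3) t3(3) t4(3) eq n12] abc by simp
    have pm: "(x, y) \<in> {(a,b),(a,c),(b,c)}" if "x \<in> {a,b,c}" "y \<in> {a,b,c}" "x < y" for x y
      using that abc by auto
    have inS: "x \<in> {a, b, c}" if "x \<in> {a1, c1, a2, c2}" for x
      using that unfolding abc(3) .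
    have inS': "x \<in> {a, b, c}" if "x \<in> {a3, c3, a4, c4}" for x
      using that sub by blast
    have m: "(a1, c1) \<in> {(a,b),(a,c),(b,c)}" "(a2, c2) \<in> {(a,b),(a,c),(b,c)}"
           "(a3, c3) \<in> {(a,b),(a,c),(b,c)}" "(a4, c4) \<in> {(a,b),(a,c),(b,c)}"
      by (rule pm; (rule inS inS')?; simp add: t1(3) t2(3) t3(3) t4(3))+
    have bnd: "1 \<le> a" "c \<le> n"
    proof -
      have "a \<in> {a1, c1, a2, c2}" "c \<in> {a1, c1, a2, c2}" unfolding abc(3) by simp_all
      then show "1 \<le> a" "c \<le> n" using t1 t2 by auto
    qed
    have Pd: "P a \<noteq> P b" "P a \<noteq> P c" "P b \<noteq> P c"
      using abc by (simp_all add: inj_eq[OF injP])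
    have ax: "(((a,b),(a,c)) \<in> Q \<and> ((a,c),(b,c)) \<in> Q) \<or> (((b,c),(a,c)) \<in> Q \<and> ((a,c),(a,b)) \<in> Q)"
      using ax0[OF bnd(1) abc(1,2) bnd(2)] by (simp add: Qi)
    show ?thesis
      by (rule tri[OF abc(1,2) m e n12 n13 Pd E1 E2 E3 E4 tr asy ax q13])
  qed
  then show ?thesis using t1 t2 t3 t4 by (simp add: Qi)
qed

theorem lemma3p2:
  fixes n :: nat and R :: "((nat \<Rightarrow> nat) \<times> (nat \<Rightarrow> nat)) set"
  assumes "reflection_order n R"
  shows "(\<forall>b l r w t1 t2 t1' t2'.
           distinct [b, l, r, w] \<and>
           bruhat_edge n b t1 l \<and> bruhat_edge n l t2 w \<and>
           bruhat_edge n b t1' r \<and> bruhat_edge n r t2' w \<and> (t1, t1') \<in> R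
           \<longrightarrow> (t1, t2) \<in> R \<and> (t2', t2) \<in> R \<and> (t2', t1') \<in> R \<and> (t1, t1') \<in> R) \<and>
         (\<forall>x1 x2 x3 x4 t t' u u'.
           distinct [x1, x2, x3, x4] \<and>
           bruhat_edge n x1 t x2 \<and> bruhat_edge n x2 t' x4 \<and> (t, t') \<in> R \<and>
           bruhat_edge n x1 u x3 \<and> bruhat_edge n x3 u' x4
           \<longrightarrow> (u', u) \<in> R)"
proof (rule conjI; intro allI impI)
  fix b l r w t1 t2 t1' t2'
  assume h: "distinct [b, l, r, w] \<and>
           bruhat_edge n b t1 l \<and> bruhat_edge n l t2 w \<and>
           bruhat_edge n b t1' r \<and> bruhat_edge n r t2' w \<and> (t1, t1') \<in> R"
  then show "(t1, t2) \<in> R \<and> (t2', t2) \<in> R \<and> (t2', t1') \<in> R \<and> (t1, t1') \<in> R"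
    using part1[OF assms, of b l r w t1 t2 t1' t2'] by blast
next
  fix x1 x2 x3 x4 t t' u u'
  assume h: "distinct [x1, x2, x3, x4] \<and>
           bruhat_edge n x1 t x2 \<and> bruhat_edge n x2 t' x4 \<and> (t, t') \<in> R \<and>
           bruhat_edge n x1 u x3 \<and> bruhat_edge n x3 u' x4"
  have Rsub: "R \<subseteq> refls n \<times> refls n" and slo: "strict_linear_order_on (refls n) R"
    using assms unfolding reflection_order_def by blast+
  have transR: "trans R" and irrR: "irrefl R" and tot: "total_on (refls n) R"
    using slo by (auto simp: strict_linear_order_on_def)
  have tu: "t \<in> refls n" "u \<in> refls n" using h by (auto simp: bruhat_edge_def)
  have "t \<noteq> u"
  proof
    assume "t = u"
    then have "x2 = x3" using h by (simp add: bruhat_edge_def)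
    then show False using h by simp
  qed
  then have "(t, u) \<in> R \<or> (u, t) \<in> R" using tot tu by (auto simp: total_on_def)
  then show "(u', u) \<in> R"
  proof
    assume "(t, u) \<in> R"
    then show ?thesis using part1[OF assms, of x1 x2 x3 x4 t t' u u'] h by simp
  next
    assume "(u, t) \<in> R"
    then have "(t', t) \<in> R" using part1[OF assms, of x1 x3 x2 x4 u u' t t'] h by auto
    with h transD[OF transR] have "(t, t) \<in> R" by blast
    with irrR have False by (simp add: irrefl_def)
    then show ?thesis ..
  qed
qed

end
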